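(* Let $\Omega\subsetneq\mathbb{C}$ be a domain which is not simply connected, and suppose $\mathscr{C}_{\Omega}^{\mathbb{D}}(z)>0$ for all $z\in\Omega$. Then for every $w\in\Omega$, $$\mathscr{C}_{\Omega}^{\mathbb{D}}(w)<\eta_\Omega(w).$$
   Context: $\mathbb{D}=\{z\in\mathbb{C}:|z|<1\}$. For domains $\Omega\subset\mathbb{C}$, $Y\subsetneq\mathbb{C}$, and points $w\in\Omega$, $s\in Y$, let $\mathcal{H}^s_w(\Omega,Y)$ be the set of holomorphic maps $h:\Omega\to Y$ with $h(w)=s$ and $h(z)\neq s$ for all $z\in\Omega\setminus\{w\}$. For a domain $Y\subsetneq\mathbb{C}$ and $v\in Y$, the Hurwitz density is $\eta_Y(v)=2/r_Y(v)$, where $r_Y(v)=\max\{h'(0): h:\mathbb{D}\to Y \text{ holomorphic},\ h(0)=v,\ h(z)\neq v \text{ for } z\in\mathbb{D}\setminus\{0\},\ h'(0)>0\}$. The Carathéodory density of the Hurwitz metric is $\mathscr{C}_{\Omega}^{Y,s}(w)=\sup\{\eta_Y(h(w))|h'(w)| : h\in\mathcal{H}^s_w(\Omega,Y)\}$ (defined to be $0$ if the family is empty), and $\mathscr{C}_{\Omega}^{\mathbb{D}}:=\mathscr{C}_{\Omega}^{\mathbb{D},0}$. *)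

theory Defs
  imports "HOL-Complex_Analysis.Complex_Analysis"
begin

text \<open>Hurwitz radius r_Y(v): the supremum (the paper's max) of h'(0) over holomorphic
  h : D \<rightarrow> Y with h(0) = v, h(z) \<noteq> v for z \<noteq> 0, and h'(0) > 0.\<close>
definition hurwitz_radius :: "complex set \<Rightarrow> complex \<Rightarrow> real" where
  "hurwitz_radius Y v = Sup {Re (deriv h 0) | h.
      h holomorphic_on ball 0 1 \<and> h ` ball 0 1 \<subseteq> Y \<and> h 0 = v \<and>
      (\<forall>z \<in> ball 0 1 - {0}. h z \<noteq> v) \<and>
      deriv h 0 \<in> \<real> \<and> Re (deriv h 0) > 0}"

definition hurwitz_density :: "complex set \<Rightarrow> complex \<Rightarrow> real" where
  "hurwitz_density Y v = 2 / hurwitz_radius Y v"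

definition hurwitz_family :: "complex set \<Rightarrow> complex set \<Rightarrow> complex \<Rightarrow> complex \<Rightarrow> (complex \<Rightarrow> complex) set" where
  "hurwitz_family \<Omega> Y w s = {h. h holomorphic_on \<Omega> \<and> h ` \<Omega> \<subseteq> Y \<and> h w = s \<and>
      (\<forall>z \<in> \<Omega> - {w}. h z \<noteq> s)}"

definition cara_hurwitz :: "complex set \<Rightarrow> complex set \<Rightarrow> complex \<Rightarrow> complex \<Rightarrow> real" where
  "cara_hurwitz \<Omega> Y s w =
     (if hurwitz_family \<Omega> Y w s = {} then 0
      else Sup {hurwitz_density Y (h w) * norm (deriv h w) | h. h \<in> hurwitz_family \<Omega> Y w s})"

definition cara_hurwitz_disc :: "complex set \<Rightarrow> complex \<Rightarrow> real" where
  "cara_hurwitz_disc \<Omega> w = cara_hurwitz \<Omega> (ball 0 1) 0 w"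

end

theory Submission
  imports Defs
begin

lemma deriv_const_on:
  assumes "open S" "w \<in> S" "h constant_on S"
  shows "deriv h w = 0"
proof -
  obtain c where c: "\<And>z. z \<in> S \<Longrightarrow> h z = c" using assms(3) by (auto simp: constant_on_def)
  have "((\<lambda>_. c) has_field_derivative 0) (at w)" by (rule DERIV_const)
  then have "(h has_field_derivative 0) (at w)"
    by (rule has_field_derivative_transform_within_open[OF _ assms(1,2)]) (use c in auto)
  then show ?thesis by (rule DERIV_imp_deriv)
qed

lemma schwarz_comp:
  assumes "open \<Omega>" "h holomorphic_on \<Omega>" "h ` \<Omega> \<subseteq> ball 0 1" "h w = 0"
    "g holomorphic_on ball 0 1" "g ` ball 0 1 \<subseteq> \<Omega>" "g 0 = w"
  shows "norm (deriv h w * deriv g 0) \<le> 1"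
    and "norm (deriv h w * deriv g 0) = 1 \<Longrightarrow> \<exists>\<alpha>. (\<forall>z. norm z < 1 \<longrightarrow> h (g z) = \<alpha> * z) \<and> norm \<alpha> = 1"
proof -
  have hol: "(h \<circ> g) holomorphic_on ball 0 1"
    using assms by (intro holomorphic_on_compose_gen) auto
  have w: "w \<in> \<Omega>" using assms(6,7) by force
  have d: "deriv (h \<circ> g) 0 = deriv h w * deriv g 0"
  proof -
    have "g field_differentiable at 0"
      using assms(5) holomorphic_on_imp_differentiable_at by force
    moreover have "h field_differentiable at (g 0)"
      using assms(1,2) w assms(7) holomorphic_on_imp_differentiable_at by blast
    ultimately show ?thesis using deriv_chain assms(7) by (metis mult.commute)
  qed
  have f0: "(h \<circ> g) 0 = 0" using assms by simp
  have no: "\<And>z. norm z < 1 \<Longrightarrow> norm ((h \<circ> g) z) < 1"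
    using assms(3,6) by (auto simp: subset_iff)
  show "norm (deriv h w * deriv g 0) \<le> 1"
    using Schwarz_Lemma(2)[OF hol f0 no, of 0] d by (simp add: o_def)
  show "\<exists>\<alpha>. (\<forall>z. norm z < 1 \<longrightarrow> h (g z) = \<alpha> * z) \<and> norm \<alpha> = 1"
    if "norm (deriv h w * deriv g 0) = 1"
    using Schwarz_Lemma(3)[OF hol f0 no, of 0] d that by (simp add: o_def)
qed

lemma radius_disc: "hurwitz_radius (ball 0 1) 0 = 1"
proof -
  let ?A = "{Re (deriv h 0) | h.
      h holomorphic_on ball 0 1 \<and> h ` ball 0 1 \<subseteq> ball 0 1 \<and> h 0 = 0 \<and>
      (\<forall>z \<in> ball 0 1 - {0}. h z \<noteq> 0) \<and>
      deriv h 0 \<in> \<real> \<and> Re (deriv h 0) > 0}"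
  have "1 \<in> ?A"
    by (rule CollectI, rule exI[of _ "\<lambda>z. z"]) auto
  moreover have "x \<le> 1" if xA: "x \<in> ?A" for x
  proof -
    obtain h where h: "x = Re (deriv h 0)" "h holomorphic_on ball 0 1" "h ` ball 0 1 \<subseteq> ball 0 1" "h 0 = 0"
      using xA by auto
    have "norm (deriv h 0) \<le> 1"
      using Schwarz_Lemma(2)[OF h(2) h(4), of 0] h(3) by (auto simp: subset_iff)
    then show ?thesis using h(1) complex_Re_le_cmod order_trans by blast
  qed
  ultimately have "Sup ?A = 1" by (intro cSup_eq_maximum) auto
  then show ?thesis unfolding hurwitz_radius_def .
qed

lemma two_points:
  assumes "open \<Omega>" "w \<in> \<Omega>" "\<Omega> \<noteq> UNIV" "h holomorphic_on \<Omega>" "h ` \<Omega> \<subseteq> ball 0 1"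
    "deriv h w \<noteq> 0"
  obtains a b where "a \<notin> \<Omega>" "b \<notin> \<Omega>" "a \<noteq> b"
proof -
  obtain a where a: "a \<notin> \<Omega>" using assms(3) by blast
  show ?thesis
  proof (cases "\<exists>b. b \<notin> \<Omega> \<and> b \<noteq> a")
    case True then show ?thesis using a that by blast
  next
    case False
    then have Om: "\<Omega> = UNIV - {a}" using a by blast
    have hol: "h holomorphic_on (UNIV - {a})" using assms(4) Om by simp
    have "\<exists>B. eventually (\<lambda>z. norm (h z) \<le> B) (at a)"
    proof (intro exI[of _ 1])
      show "eventually (\<lambda>z. norm (h z) \<le> 1) (at a)"
        unfolding eventually_at_filter
        using assms(5) Om by (intro always_eventually) (force simp: subset_iff less_imp_le)
    qed
    then obtain G where G: "G holomorphic_on UNIV" "\<And>z. z \<in> UNIV - {a} \<Longrightarrow> G z = h z"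
      using holomorphic_on_extend_bounded[OF hol] by auto
    have "range G \<subseteq> insert (G a) (ball 0 1)"
    proof
      fix y assume "y \<in> range G"
      then obtain z where z: "y = G z" by blast
      show "y \<in> insert (G a) (ball 0 1)"
      proof (cases "z = a")
        case False
        then have "G z = h z" "z \<in> \<Omega>" using G(2) Om by auto
        then show ?thesis using z assms(5) by blast
      qed (use z in simp)
    qed
    then have "bounded (range G)"
      by (meson bounded_ball bounded_insert bounded_subset)
    then have "G constant_on UNIV" using Liouville_theorem G(1) by blast
    then obtain c where c: "\<And>x. G x = c" by (auto simp: constant_on_def)
    have "h constant_on \<Omega>" unfolding constant_on_def
    proof (intro exI[of _ c] ballI)
      fix x assume "x \<in> \<Omega>"
      then show "h x = c" using G(2)[of x] c[of x] Om by auto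
    qed
    then have "deriv h w = 0" using deriv_const_on assms(1,2) by blast
    then show ?thesis using assms(6) by blast
  qed
qed

lemma schottky_bound:
  assumes "a \<notin> \<Omega>" "b \<notin> \<Omega>" "a \<noteq> b"
    and H: "\<And>g. g \<in> \<H> \<Longrightarrow> g holomorphic_on ball 0 1 \<and> g ` ball 0 1 \<subseteq> \<Omega> \<and> g 0 = w"
    and K: "compact K" "K \<subseteq> ball 0 1"
  shows "\<exists>B. \<forall>g \<in> \<H>. \<forall>z \<in> K. norm (g z) \<le> B"
proof (cases "K = {}")
  case True then show ?thesis by auto
next
  case False
  have "compact (norm ` K)" using K(1) by (intro compact_continuous_image continuous_intros)
  then obtain \<rho> where \<rho>: "\<rho> \<in> norm ` K" "\<And>y. y \<in> norm ` K \<Longrightarrow> y \<le> \<rho>"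
    using compact_attains_sup False by (metis image_is_empty)
  have \<rho>1: "\<rho> < 1" "0 \<le> \<rho>" using \<rho>(1) K(2) by auto
  define q where "q = (1 + \<rho>) / 2"
  have q01: "0 < q" "q < 1" using \<rho>1 by (auto simp: q_def)
  have "0 \<le> (1 - \<rho>) * (1 - \<rho>)" by simp
  then have "\<rho> \<le> q * q" by (simp add: q_def algebra_simps)
  then have "\<rho> / q \<le> q" using q01 by (simp add: divide_le_eq)
  note q = q01 this
  have qu: "complex_of_real q * u \<in> ball 0 1" if "u \<in> cball 0 1" for u :: complex
  proof -
    have "norm u \<le> 1" using that by simp
    then have "q * norm u \<le> q" by (rule mult_left_le) (use q01 in auto)
    moreover have "norm (complex_of_real q * u) = q * norm u" using q01 by (simp add: norm_mult)
    ultimately have "norm (complex_of_real q * u) < 1" using q01 by linarith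
    then show ?thesis by simp
  qed
  define r where "r = norm ((w - a) / (b - a))"
  define M where "M = exp(pi * exp(pi * (2 + 2 * r + 12 * q / (1 - q))))"
  have "norm (g z) \<le> norm a + norm (b - a) * M" if g: "g \<in> \<H>" and z: "z \<in> K" for g z
  proof -
    define F where "F = (\<lambda>u. (g (complex_of_real q * u) - a) / (b - a))"
    have gh: "g holomorphic_on ball 0 1" "g ` ball 0 1 \<subseteq> \<Omega>" "g 0 = w" using H g by auto
    have "(g \<circ> (\<lambda>u. complex_of_real q * u)) holomorphic_on cball 0 1"
    proof (rule holomorphic_on_compose_gen[OF _ gh(1)])
      show "(\<lambda>u. complex_of_real q * u) holomorphic_on cball 0 1" by (intro holomorphic_intros)
      show "(\<lambda>u. complex_of_real q * u) ` cball 0 1 \<subseteq> ball 0 1"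
        using qu by (auto simp: image_subset_iff dist_0_norm)
    qed
    then have holF: "F holomorphic_on cball 0 1"
      unfolding F_def o_def by (intro holomorphic_intros) (use assms(3) in auto)
    have F0: "norm (F 0) \<le> r" using gh(3) by (simp add: F_def r_def)
    have not01: "\<not> (F u = 0 \<or> F u = 1)" if "u \<in> cball 0 1" for u
    proof -
      have "complex_of_real q * u \<in> ball 0 1" using qu that by blast
      then have "g (complex_of_real q * u) \<in> \<Omega>" using gh(2) by blast
      then have "g (complex_of_real q * u) \<noteq> a" "g (complex_of_real q * u) \<noteq> b" using assms(1,2) by auto
      then show ?thesis using assms(3) by (auto simp: F_def divide_eq_1_iff)
    qed
    have "norm z \<le> \<rho>" using \<rho>(2)[of "norm z"] z by blast
    then have "norm z / q \<le> \<rho> / q" using q01 by (intro divide_right_mono) auto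
    then have nz: "norm (z / complex_of_real q) \<le> q"
      using q(3) q01 by (simp add: norm_divide)
    have "norm (F (z / complex_of_real q)) \<le> M"
      unfolding M_def by (rule Schottky[OF holF F0 not01 q(1) q(2) nz]) auto
    moreover have "g z = a + (b - a) * F (z / complex_of_real q)" using q assms(3) by (simp add: F_def)
    moreover have "norm ((b - a) * F (z / complex_of_real q)) \<le> norm (b - a) * M"
      using calculation(1) by (simp add: norm_mult mult_left_mono)
    ultimately show ?thesis
      by (metis add_mono norm_triangle_ineq order_trans order_refl)
  qed
  then show ?thesis by blast
qed

lemma deriv_lim:
  assumes "open S" "z \<in> S"
    and ul: "\<And>K. compact K \<Longrightarrow> K \<subseteq> S \<Longrightarrow> uniform_limit K f g sequentially"
    and hol: "\<And>n. f n holomorphic_on S"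
  shows "(\<lambda>n. deriv (f n) z) \<longlonglongrightarrow> deriv g z"
proof -
  obtain e where e: "e > 0" "cball z e \<subseteq> S" using assms(1,2) open_contains_cball by blast
  have "uniform_limit (cball z e) f g sequentially" using ul e by auto
  then have u: "uniform_limit (ball z e) f g sequentially"
    by (rule uniform_limit_on_subset) auto
  have "eventually (\<lambda>n. f n holomorphic_on ball z e) sequentially"
    using hol e by (intro always_eventually allI holomorphic_on_subset[OF hol]) auto
  then show ?thesis
    by (rule deriv_complex_uniform_limit[OF u]) (use e in auto)
qed

lemma limit_h:
  assumes "open \<Omega>" "connected \<Omega>" "w \<in> \<Omega>"
    and hs: "\<And>n. hs n holomorphic_on \<Omega> \<and> hs n ` \<Omega> \<subseteq> ball 0 1 \<and> hs n w = 0"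
    and lim: "(\<lambda>n. norm (deriv (hs n) w)) \<longlonglongrightarrow> L" and "L > 0"
  obtains hl where "hl holomorphic_on \<Omega>" "hl ` \<Omega> \<subseteq> ball 0 1" "hl w = 0" "norm (deriv hl w) = L"
proof -
  have bd: "\<exists>B. \<forall>h \<in> range hs. \<forall>z \<in> K. norm (h z) \<le> B" if KK: "compact K" "K \<subseteq> \<Omega>" for K
  proof (intro exI[of _ 1] ballI)
    fix h z assume "h \<in> range hs" "z \<in> K"
    then obtain n where "h = hs n" "z \<in> \<Omega>" using KK(2) by blast
    then have "h z \<in> ball 0 1" using hs[of n] by blast
    then show "norm (h z) \<le> 1" by simp
  qed
  obtain hl r where hl: "hl holomorphic_on \<Omega>" "strict_mono (r :: nat \<Rightarrow> nat)"
      "\<And>x. x \<in> \<Omega> \<Longrightarrow> ((\<lambda>n. hs (r n) x) \<longlongrightarrow> hl x) sequentially"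
      "\<And>K. \<lbrakk>compact K; K \<subseteq> \<Omega>\<rbrakk> \<Longrightarrow> uniform_limit K (hs \<circ> r) hl sequentially"
  proof -
    have hH: "\<And>h. h \<in> range hs \<Longrightarrow> h holomorphic_on \<Omega>" using hs by blast
    show thesis using Montel[OF assms(1) hH bd subset_refl] that by blast
  qed
  have "(\<lambda>n. deriv ((hs \<circ> r) n) w) \<longlonglongrightarrow> deriv hl w"
    by (rule deriv_lim[OF assms(1,3) hl(4)]) (use hs in auto)
  then have "(\<lambda>n. norm (deriv (hs (r n)) w)) \<longlonglongrightarrow> norm (deriv hl w)"
    by (intro tendsto_norm) (simp add: o_def)
  moreover have "(\<lambda>n. norm (deriv (hs (r n)) w)) \<longlonglongrightarrow> L"
    using LIMSEQ_subseq_LIMSEQ[OF lim hl(2)] by (simp add: o_def)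
  ultimately have dL: "norm (deriv hl w) = L" using LIMSEQ_unique by blast
  have "(\<lambda>n. hs (r n) w) \<longlonglongrightarrow> hl w" using hl(3) assms(3) by blast
  then have hw: "hl w = 0" using hs by (simp add: LIMSEQ_const_iff)
  have cb: "hl z \<in> cball 0 1" if "z \<in> \<Omega>" for z
  proof -
    have "(\<lambda>n. norm (hs (r n) z)) \<longlonglongrightarrow> norm (hl z)" using hl(3) that by (intro tendsto_norm) auto
    moreover have "\<forall>n. norm (hs (r n) z) \<le> 1"
    proof
      fix n
      have "hs (r n) z \<in> ball 0 1" using hs[of "r n"] that by blast
      then show "norm (hs (r n) z) \<le> 1" by simp
    qed
    ultimately have "norm (hl z) \<le> 1" by (intro LIMSEQ_le_const2) auto
    then show ?thesis by simp
  qed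
  have nc: "\<not> hl constant_on \<Omega>"
  proof
    assume "hl constant_on \<Omega>"
    then have "deriv hl w = 0" by (rule deriv_const_on[OF assms(1,3)])
    then show False using dL \<open>L > 0\<close> by simp
  qed
  have "open (hl ` \<Omega>)" by (rule open_mapping_thm[OF hl(1) assms(1,2) assms(1) order_refl nc])
  then have "hl ` \<Omega> \<subseteq> interior (cball 0 1)" using cb by (intro interior_maximal) auto
  then have "hl ` \<Omega> \<subseteq> ball 0 1" by simp
  then show ?thesis using that hl(1) hw dL by blast
qed

lemma limit_g:
  assumes "open \<Omega>" "a \<notin> \<Omega>" "b \<notin> \<Omega>" "a \<noteq> b"
    and gs: "\<And>n. gs n holomorphic_on ball 0 1 \<and> gs n ` ball 0 1 \<subseteq> \<Omega> \<and> gs n 0 = w"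
    and lim: "(\<lambda>n. deriv (gs n) 0) \<longlonglongrightarrow> d" and "d \<noteq> 0"
  obtains gl where "gl holomorphic_on ball 0 1" "gl ` ball 0 1 \<subseteq> \<Omega>" "gl 0 = w" "deriv gl 0 = d"
proof -
  have bd: "\<exists>B. \<forall>h \<in> range gs. \<forall>z \<in> K. norm (h z) \<le> B" if "compact K" "K \<subseteq> ball 0 1" for K
    by (rule schottky_bound[OF assms(2,3,4) _ that]) (use gs in auto)
  obtain gl r where gl: "gl holomorphic_on ball 0 1" "strict_mono (r :: nat \<Rightarrow> nat)"
      "\<And>x. x \<in> ball 0 1 \<Longrightarrow> ((\<lambda>n. gs (r n) x) \<longlongrightarrow> gl x) sequentially"
      "\<And>K. \<lbrakk>compact K; K \<subseteq> ball 0 1\<rbrakk> \<Longrightarrow> uniform_limit K (gs \<circ> r) gl sequentially"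
  proof -
    have hH: "\<And>h. h \<in> range gs \<Longrightarrow> h holomorphic_on ball 0 1" using gs by blast
    show thesis using Montel[OF open_ball hH bd subset_refl] that by blast
  qed
  have "(\<lambda>n. deriv ((gs \<circ> r) n) 0) \<longlonglongrightarrow> deriv gl 0"
    by (rule deriv_lim[OF open_ball _ gl(4)]) (use gs in auto)
  moreover have "(\<lambda>n. deriv ((gs \<circ> r) n) 0) \<longlonglongrightarrow> d"
    using LIMSEQ_subseq_LIMSEQ[OF lim gl(2)] by (simp add: o_def)
  ultimately have dd: "deriv gl 0 = d" using LIMSEQ_unique by blast
  have "(\<lambda>n. gs (r n) 0) \<longlonglongrightarrow> gl 0" using gl(3) by simp
  then have g0: "gl 0 = w" using gs by (simp add: LIMSEQ_const_iff)
  have nc: "\<not> gl constant_on ball 0 1"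
  proof
    assume "gl constant_on ball 0 1"
    then have "deriv gl 0 = 0" using deriv_const_on[of "ball 0 1" 0 gl] by simp
    then show False using dd \<open>d \<noteq> 0\<close> by simp
  qed
  have "gl z \<in> \<Omega>" if z: "z \<in> ball 0 1" for z
  proof (rule ccontr)
    assume c: "gl z \<notin> \<Omega>"
    define c where "c = gl z"
    have "gl z - c \<noteq> 0"
    proof (rule Hurwitz_no_zeros[of "ball 0 1" "\<lambda>n u. gs (r n) u - c" "\<lambda>u. gl u - c"])
      show "open (ball (0::complex) 1)" "connected (ball (0::complex) 1)" by auto
      show "(\<lambda>u. gs (r n) u - c) holomorphic_on ball 0 1" for n using gs by (intro holomorphic_intros) auto
      show "(\<lambda>u. gl u - c) holomorphic_on ball 0 1" using gl(1) by (intro holomorphic_intros) auto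
      show "uniform_limit K (\<lambda>n u. gs (r n) u - c) (\<lambda>u. gl u - c) sequentially"
        if "compact K" "K \<subseteq> ball 0 1" for K
        using gl(4)[OF that] by (intro uniform_limit_intros) (simp_all add: o_def)
      show "\<not> (\<lambda>u. gl u - c) constant_on ball 0 1"
      proof
        assume "(\<lambda>u. gl u - c) constant_on ball 0 1"
        then obtain k where "\<And>u. u \<in> ball 0 1 \<Longrightarrow> gl u - c = k" by (auto simp: constant_on_def)
        then have "gl constant_on ball 0 1" unfolding constant_on_def
          by (intro exI[of _ "k + c"]) (metis diff_add_cancel)
        then show False using nc by blast
      qed
      show "gs (r n) u - c \<noteq> 0" if "u \<in> ball 0 1" for n u
      proof -
        have "gs (r n) u \<in> \<Omega>" using gs[of "r n"] that by blast
        then show ?thesis using c c_def by auto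
      qed
    qed (use z in auto)
    then show False by (simp add: c_def)
  qed
  then show ?thesis using that gl(1) g0 dd by blast
qed

lemma final_simply:
  assumes "open \<Omega>" "connected \<Omega>" "w \<in> \<Omega>"
    and hl: "hl holomorphic_on \<Omega>" "hl ` \<Omega> \<subseteq> ball 0 1" "hl w = 0"
    and gl: "gl holomorphic_on ball 0 1" "gl ` ball 0 1 \<subseteq> \<Omega>" "gl 0 = w"
    and one: "norm (deriv hl w * deriv gl 0) = 1" and nz: "deriv gl 0 \<noteq> 0"
  shows "simply_connected \<Omega>"
proof -
  obtain \<alpha> where \<alpha>: "\<And>z. norm z < 1 \<Longrightarrow> hl (gl z) = \<alpha> * z" "norm \<alpha> = 1"
    using schwarz_comp(2)[OF assms(1) hl gl one] by blast
  have a0: "\<alpha> \<noteq> 0" using \<alpha>(2) by auto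
  have hlb: "hl z / \<alpha> \<in> ball 0 1" if "z \<in> \<Omega>" for z
    using hl(2) that \<alpha>(2) by (auto simp: norm_divide subset_iff)
  have holk: "(\<lambda>z. gl (hl z / \<alpha>)) holomorphic_on \<Omega>"
  proof -
    have "(gl \<circ> (\<lambda>z. hl z / \<alpha>)) holomorphic_on \<Omega>"
      by (rule holomorphic_on_compose_gen[OF _ gl(1)]) (use hl(1) a0 hlb in \<open>auto intro!: holomorphic_intros\<close>)
    then show ?thesis by (simp add: o_def)
  qed
  have nc: "\<not> gl constant_on ball 0 1"
  proof
    assume "gl constant_on ball 0 1"
    then have "deriv gl 0 = 0" using deriv_const_on[of "ball 0 1" 0 gl] by simp
    then show False using nz by simp
  qed
  have og: "open (gl ` ball 0 1)"
    by (rule open_mapping_thm[OF gl(1) open_ball connected_ball open_ball order_refl nc])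
  have eqs: "gl (hl z / \<alpha>) = z" if zi: "z \<in> gl ` ball 0 1" for z
  proof -
    obtain \<zeta> where "\<zeta> \<in> ball 0 1" "z = gl \<zeta>" using zi by blast
    then show "gl (hl z / \<alpha>) = z" using \<alpha>(1)[of \<zeta>] a0 by simp
  qed
  have hid: "(\<lambda>z. z) holomorphic_on \<Omega>" by (intro holomorphic_intros)
  have ne: "gl ` ball 0 1 \<noteq> {}" by auto
  have k: "gl (hl z / \<alpha>) = z" if "z \<in> \<Omega>" for z
    using analytic_continuation_open[of "gl ` ball 0 1" \<Omega> "\<lambda>z. gl (hl z / \<alpha>)" "\<lambda>z. z" z,
       OF og assms(1) ne assms(2) gl(2) holk hid eqs that] .
  have e1: "gl ` ball 0 1 = \<Omega>"
  proof
    show "gl ` ball 0 1 \<subseteq> \<Omega>" by (rule gl(2))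
    show "\<Omega> \<subseteq> gl ` ball 0 1"
    proof
      fix z assume z: "z \<in> \<Omega>"
      then have "z = gl (hl z / \<alpha>)" using k by simp
      then show "z \<in> gl ` ball 0 1" using hlb[OF z] by blast
    qed
  qed
  have inv1: "hl (gl x) / \<alpha> = x" if "x \<in> ball 0 1" for x :: complex using \<alpha>(1)[of x] a0 that by simp
  have e2: "(\<lambda>z. hl z / \<alpha>) ` \<Omega> = ball 0 1"
  proof
    show "(\<lambda>z. hl z / \<alpha>) ` \<Omega> \<subseteq> ball 0 1" using hlb by blast
    show "ball 0 1 \<subseteq> (\<lambda>z. hl z / \<alpha>) ` \<Omega>"
    proof
      fix x :: complex assume x: "x \<in> ball 0 1"
      then have "gl x \<in> \<Omega>" using gl(2) by blast
      then show "x \<in> (\<lambda>z. hl z / \<alpha>) ` \<Omega>" using inv1[OF x] by force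
    qed
  qed
  have c1: "continuous_on (ball 0 1) gl" using gl(1) holomorphic_on_imp_continuous_on by blast
  have c2: "continuous_on \<Omega> (\<lambda>z. hl z / \<alpha>)"
    using hl(1) holomorphic_on_imp_continuous_on a0 by (intro continuous_intros) auto
  have "homeomorphism (ball 0 1) \<Omega> gl (\<lambda>z. hl z / \<alpha>)"
    unfolding homeomorphism_def using e1 e2 c1 c2 inv1 k by blast
  then have "ball (0::complex) 1 homeomorphic \<Omega>" unfolding homeomorphic_def by blast
  moreover have "simply_connected (ball (0::complex) 1)"
    by (simp add: convex_imp_simply_connected)
  ultimately show ?thesis using homeomorphic_simply_connected by blast
qed

lemma half_le1: "(a::real) < 2 * b \<Longrightarrow> a / 2 \<le> b" by linarith
lemma half_le2: "2 * (b::real) \<le> a \<Longrightarrow> b \<le> a / 2" by linarith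

theorem proposition3p6:
  fixes \<Omega> :: "complex set"
  assumes "open \<Omega>" and "connected \<Omega>" and "\<Omega> \<noteq> {}" and "\<Omega> \<noteq> UNIV"
    and "\<not> simply_connected \<Omega>"
    and "\<forall>z \<in> \<Omega>. cara_hurwitz_disc \<Omega> z > 0"
    and "w \<in> \<Omega>"
  shows "cara_hurwitz_disc \<Omega> w < hurwitz_density \<Omega> w"
proof (rule ccontr)
  assume nlt: "\<not> cara_hurwitz_disc \<Omega> w < hurwitz_density \<Omega> w"
  define F where "F = hurwitz_family \<Omega> (ball 0 1) w 0"
  define Q where "Q = {hurwitz_density (ball 0 1) (h w) * norm (deriv h w) | h. h \<in> F}"
  define T where "T = {Re (deriv g 0) | g. g holomorphic_on ball 0 1 \<and> g ` ball 0 1 \<subseteq> \<Omega> \<and> g 0 = w \<and>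
      (\<forall>z \<in> ball 0 1 - {0}. g z \<noteq> w) \<and> deriv g 0 \<in> \<real> \<and> Re (deriv g 0) > 0}"
  have eta: "hurwitz_density \<Omega> w = 2 / Sup T"
    by (simp add: hurwitz_density_def hurwitz_radius_def T_def)
  have cpos: "cara_hurwitz_disc \<Omega> w > 0" using assms(6,7) by blast
  have Fne: "F \<noteq> {}" using cpos by (auto simp: cara_hurwitz_disc_def cara_hurwitz_def F_def)
  have cara: "cara_hurwitz_disc \<Omega> w = Sup Q"
    using Fne by (simp add: cara_hurwitz_disc_def cara_hurwitz_def F_def Q_def)
  have Fmem: "h holomorphic_on \<Omega> \<and> h ` \<Omega> \<subseteq> ball 0 1 \<and> h w = 0" if "h \<in> F" for h
    using that by (simp add: F_def hurwitz_family_def)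
  have dens2: "hurwitz_density (ball 0 1) (h w) = 2" if "h \<in> F" for h
    using Fmem[OF that] radius_disc by (simp add: hurwitz_density_def)
  have Qmem: "x \<in> Q \<longleftrightarrow> (\<exists>h\<in>F. x = 2 * norm (deriv h w))" for x
  proof
    assume "x \<in> Q" then show "\<exists>h\<in>F. x = 2 * norm (deriv h w)" unfolding Q_def using dens2 by auto
  next
    assume "\<exists>h\<in>F. x = 2 * norm (deriv h w)"
    then obtain h where h: "h \<in> F" "x = 2 * norm (deriv h w)" by blast
    show "x \<in> Q" unfolding Q_def using dens2[OF h(1)] h by (intro CollectI exI[of _ h]) simp
  qed
  have Tmem: "\<exists>g. g holomorphic_on ball 0 1 \<and> g ` ball 0 1 \<subseteq> \<Omega> \<and> g 0 = w \<and>
                  deriv g 0 = of_real y \<and> y > 0" if "y \<in> T" for y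
  proof -
    obtain g where g: "y = Re (deriv g 0)" "g holomorphic_on ball 0 1" "g ` ball 0 1 \<subseteq> \<Omega>" "g 0 = w"
      "deriv g 0 \<in> \<real>" "Re (deriv g 0) > 0"
      using \<open>y \<in> T\<close> unfolding T_def by blast
    have "deriv g 0 = of_real y" using g(1,5) by (simp add: of_real_Re)
    then show ?thesis using g by blast
  qed
  have key: "x * y \<le> 2" if xy: "x \<in> Q" "y \<in> T" for x y
  proof -
    obtain h where h: "h \<in> F" "x = 2 * norm (deriv h w)" using Qmem xy(1) by blast
    obtain g where g: "g holomorphic_on ball 0 1" "g ` ball 0 1 \<subseteq> \<Omega>" "g 0 = w"
                  "deriv g 0 = of_real y" "y > 0" using Tmem[OF xy(2)] by blast
    have hh: "h holomorphic_on \<Omega>" "h ` \<Omega> \<subseteq> ball 0 1" "h w = 0" using Fmem[OF h(1)] by auto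
    have "norm (deriv h w * deriv g 0) \<le> 1" by (rule schwarz_comp(1)[OF assms(1) hh g(1,2,3)])
    then have "norm (deriv h w) * y \<le> 1" using g(4,5) by (simp add: norm_mult)
    then show ?thesis using h(2) by simp
  qed
  obtain e where e: "e > 0" "ball w e \<subseteq> \<Omega>" using assms(1,7) open_contains_ball by blast
  have eT: "e \<in> T"
  proof -
    define g where "g = (\<lambda>z. w + of_real e * z)"
    have "(g has_field_derivative of_real e) (at 0)"
      unfolding g_def by (auto intro!: derivative_eq_intros)
    then have dg: "deriv g 0 = of_real e" by (rule DERIV_imp_deriv)
    have "g ` ball 0 1 \<subseteq> ball w e"
    proof
      fix y assume "y \<in> g ` ball 0 1"
      then obtain z where z: "norm z < 1" "y = g z" by auto
      have "dist w y = e * norm z" using z(2) e(1) by (simp add: g_def dist_norm norm_mult)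
      also have "\<dots> < e" using z(1) e(1) by simp
      finally show "y \<in> ball w e" by simp
    qed
    then have "g ` ball 0 1 \<subseteq> \<Omega>" using e(2) by blast
    moreover have "g holomorphic_on ball 0 1" unfolding g_def by (intro holomorphic_intros)
    moreover have "\<forall>z \<in> ball 0 1 - {0}. g z \<noteq> w" using e(1) by (simp add: g_def)
    moreover have "g 0 = w" by (simp add: g_def)
    ultimately show ?thesis unfolding T_def using dg e(1)
      by (intro CollectI exI[of _ g]) auto
  qed
  have Qne: "Q \<noteq> {}" using Fne Qmem by blast
  obtain x0 where x0: "x0 \<in> Q" "x0 > 0"
  proof (rule ccontr)
    assume "\<not> thesis"
    then have "\<forall>x\<in>Q. x \<le> 0" using that by (meson not_le)
    then have "Sup Q \<le> 0" using Qne by (intro cSup_least) auto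
    then show False using cpos cara by simp
  qed
  have bddT: "bdd_above T"
  proof (rule bdd_aboveI)
    fix y assume "y \<in> T"
    then have "x0 * y \<le> 2" using key x0 by blast
    then show "y \<le> 2 / x0" using pos_le_divide_eq[OF x0(2), of y 2] by (simp add: mult.commute)
  qed
  have bddQ: "bdd_above Q"
  proof (rule bdd_aboveI)
    fix x assume "x \<in> Q"
    then have "x * e \<le> 2" using key eT by blast
    then show "x \<le> 2 / e" using pos_le_divide_eq[OF e(1), of x 2] by simp
  qed
  define s where "s = Sup Q"
  define t where "t = Sup T"
  have spos: "s > 0" using cara cpos s_def by simp
  have tpos: "t > 0" using cSup_upper[OF eT bddT] e(1) t_def by simp
  have le1: "y \<le> 2 / s" if "y \<in> T" for y
  proof -
    have yp: "y > 0" using Tmem[OF that] by blast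
    have "s \<le> 2 / y" unfolding s_def
    proof (rule cSup_least[OF Qne])
      fix x assume "x \<in> Q"
      then have "x * y \<le> 2" using key that by blast
      then show "x \<le> 2 / y" using pos_le_divide_eq[OF yp, of x 2] by simp
    qed
    then show ?thesis using pos_le_divide_eq[OF yp, of s 2] pos_le_divide_eq[OF spos, of y 2] by (simp add: mult.commute)
  qed
  have "t \<le> 2 / s" unfolding t_def using eT by (intro cSup_least le1) auto
  then have st1: "s * t \<le> 2" using pos_le_divide_eq[OF spos, of t 2] by (simp add: mult.commute)
  have "2 / t \<le> s" using nlt cara eta s_def t_def by simp
  then have st2: "2 \<le> s * t" using pos_divide_le_eq[OF tpos, of 2 s] by simp
  have st: "(s / 2) * t = 1" using st1 st2 by simp
  have inv0: "(\<lambda>n. inverse (real (Suc n))) \<longlonglongrightarrow> 0" by (rule LIMSEQ_inverse_real_of_nat)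
  have invpos: "\<And>n. inverse (real (Suc n)) > 0" by simp
  have exh: "\<forall>n. \<exists>h. h \<in> F \<and> s - inverse (real (Suc n)) < 2 * norm (deriv h w)"
  proof
    fix n
    have "s - inverse (real (Suc n)) < Sup Q" using invpos[of n] s_def by simp
    then have "\<exists>x\<in>Q. s - inverse (real (Suc n)) < x" by (subst (asm) less_cSup_iff[OF Qne bddQ])
    then obtain x where x: "x \<in> Q" "s - inverse (real (Suc n)) < x" by blast
    obtain h where "h \<in> F" "x = 2 * norm (deriv h w)" using Qmem[of x, THEN iffD1, OF x(1)] by blast
    then show "\<exists>h. h \<in> F \<and> s - inverse (real (Suc n)) < 2 * norm (deriv h w)"
      using x(2) by blast
  qed
  obtain hs where hs0: "\<forall>n. hs n \<in> F \<and> s - inverse (real (Suc n)) < 2 * norm (deriv (hs n) w)"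
    using choice[OF exh] by blast
  have hs: "\<And>n. hs n \<in> F" "\<And>n. s - inverse (real (Suc n)) < 2 * norm (deriv (hs n) w)"
    using hs0 by auto
  have hsup: "2 * norm (deriv (hs n) w) \<le> s" for n
  proof -
    have "2 * norm (deriv (hs n) w) \<in> Q" using Qmem[THEN iffD2] hs(1) by blast
    then show ?thesis unfolding s_def by (rule cSup_upper[OF _ bddQ])
  qed
  have hlim: "(\<lambda>n. norm (deriv (hs n) w)) \<longlonglongrightarrow> s / 2"
  proof (rule tendsto_sandwich[of "\<lambda>n. (s - inverse (real (Suc n))) / 2" _ _ "\<lambda>n. s / 2"])
    show "\<forall>\<^sub>F n in sequentially. (s - inverse (real (Suc n))) / 2 \<le> norm (deriv (hs n) w)"
    proof (intro always_eventually allI)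
      fix n show "(s - inverse (real (Suc n))) / 2 \<le> norm (deriv (hs n) w)" using hs(2)[of n] by (rule half_le1)
    qed
    show "\<forall>\<^sub>F n in sequentially. norm (deriv (hs n) w) \<le> s / 2"
    proof (intro always_eventually allI)
      fix n show "norm (deriv (hs n) w) \<le> s / 2" using hsup[of n] by (rule half_le2)
    qed
    have "(\<lambda>n. s - inverse (real (Suc n))) \<longlonglongrightarrow> s - 0" by (rule tendsto_diff[OF tendsto_const inv0])
    then have "(\<lambda>n. (s - inverse (real (Suc n))) / 2) \<longlonglongrightarrow> (s - 0) / 2"
      by (rule tendsto_divide[OF _ tendsto_const]) simp
    then show "(\<lambda>n. (s - inverse (real (Suc n))) / 2) \<longlonglongrightarrow> s / 2" by simp
  qed simp
  obtain hl where hl: "hl holomorphic_on \<Omega>" "hl ` \<Omega> \<subseteq> ball 0 1" "hl w = 0" "norm (deriv hl w) = s / 2"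
    by (rule limit_h[OF assms(1,2,7) _ hlim]) (use Fmem hs(1) spos in auto)
  have dhl: "deriv hl w \<noteq> 0" using hl(4) spos by auto
  obtain a b where ab: "a \<notin> \<Omega>" "b \<notin> \<Omega>" "a \<noteq> b"
    by (rule two_points[OF assms(1,7,4) hl(1,2) dhl])
  have Tne: "T \<noteq> {}" using eT by blast
  have exg: "\<forall>n. \<exists>g. (g holomorphic_on ball 0 1 \<and> g ` ball 0 1 \<subseteq> \<Omega> \<and> g 0 = w) \<and>
            (\<exists>y. deriv g 0 = of_real y \<and> t - inverse (real (Suc n)) < y \<and> y \<le> t)"
  proof
    fix n
    have "t - inverse (real (Suc n)) < Sup T" using invpos[of n] t_def by simp
    then have "\<exists>y\<in>T. t - inverse (real (Suc n)) < y" by (subst (asm) less_cSup_iff[OF Tne bddT])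
    then obtain y where y: "y \<in> T" "t - inverse (real (Suc n)) < y" by blast
    have "y \<le> t" unfolding t_def by (rule cSup_upper[OF y(1) bddT])
    then show "\<exists>g. (g holomorphic_on ball 0 1 \<and> g ` ball 0 1 \<subseteq> \<Omega> \<and> g 0 = w) \<and>
            (\<exists>y. deriv g 0 = of_real y \<and> t - inverse (real (Suc n)) < y \<and> y \<le> t)"
      using Tmem[OF y(1)] y(2) by blast
  qed
  obtain gs where gs0: "\<forall>n. (gs n holomorphic_on ball 0 1 \<and> gs n ` ball 0 1 \<subseteq> \<Omega> \<and> gs n 0 = w) \<and>
            (\<exists>y. deriv (gs n) 0 = of_real y \<and> t - inverse (real (Suc n)) < y \<and> y \<le> t)"
    using choice[OF exg] by blast
  have gs: "\<And>n. gs n holomorphic_on ball 0 1 \<and> gs n ` ball 0 1 \<subseteq> \<Omega> \<and> gs n 0 = w"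
    using gs0 by blast
  have exy: "\<forall>n. \<exists>y. deriv (gs n) 0 = of_real y \<and> t - inverse (real (Suc n)) < y \<and> y \<le> t"
    using gs0 by blast
  obtain ys where ys0: "\<forall>n. deriv (gs n) 0 = of_real (ys n) \<and> t - inverse (real (Suc n)) < ys n \<and> ys n \<le> t"
    using choice[OF exy] by blast
  have ys: "\<And>n. deriv (gs n) 0 = of_real (ys n)" "\<And>n. t - inverse (real (Suc n)) < ys n"
      "\<And>n. ys n \<le> t"
    using ys0 by auto
  have ylim: "ys \<longlonglongrightarrow> t"
  proof (rule tendsto_sandwich[of "\<lambda>n. t - inverse (real (Suc n))" _ _ "\<lambda>n. t"])
    show "\<forall>\<^sub>F n in sequentially. t - inverse (real (Suc n)) \<le> ys n"
      using ys(2) by (intro always_eventually allI less_imp_le)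
    show "\<forall>\<^sub>F n in sequentially. ys n \<le> t"
      using ys(3) by (intro always_eventually allI)
    have "(\<lambda>n. t - inverse (real (Suc n))) \<longlonglongrightarrow> t - 0" by (rule tendsto_diff[OF tendsto_const inv0])
    then show "(\<lambda>n. t - inverse (real (Suc n))) \<longlonglongrightarrow> t" by simp
  qed simp
  have glim: "(\<lambda>n. deriv (gs n) 0) \<longlonglongrightarrow> of_real t"
    unfolding ys(1) using ylim by (rule tendsto_of_real)
  have t0: "(of_real t :: complex) \<noteq> 0" using tpos by simp
  obtain gl where gl: "gl holomorphic_on ball 0 1" "gl ` ball 0 1 \<subseteq> \<Omega>" "gl 0 = w" "deriv gl 0 = of_real t"
    by (rule limit_g[OF assms(1) ab gs glim t0])
  have "norm (deriv hl w * deriv gl 0) = 1"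
    unfolding norm_mult gl(4) hl(4) norm_of_real abs_of_pos[OF tpos] by (rule st)
  then have "simply_connected \<Omega>"
    by (rule final_simply[OF assms(1,2,7) hl(1,2,3) gl(1,2,3)]) (use gl(4) t0 in simp)
  then show False using assms(5) by blast
qed

end
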